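(* Let $n\ge q\ge 2$ be integers and put $S_1=\sqrt{q^2+4(q-1)(n-2)}$. Let $d$ be an integer and define $j$ by $d=n-1-\frac{n-2+j}{q}$ (so $j=q(n-1-d)-n+2$), and assume $j\in\left[0,\frac{S_1-q}{2}\right)$. Put $s=1-\frac{2d}{n}$, $d_0=n-\frac{j(n-1)}{q(j+q-1)}$, and let $e$ be the unique rational number in $(0,1]$ such that $d_0+e$ is an integer. Define $$f(t)=\Big(t+1+\tfrac{2e}{n}-\tfrac{2j(n-1)}{nq(j+q-1)}\Big)\Big(t+1+\tfrac{2(e-1)}{n}-\tfrac{2j(n-1)}{nq(j+q-1)}\Big)(t-s),$$ and write its Krawtchouk expansion as $f(t)=f_0+f_1Q_1^{(n,q)}(t)+f_2Q_2^{(n,q)}(t)+f_3Q_3^{(n,q)}(t)$. Then $f_1>0$.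
   Context: For integers $n,q$ and $0\le i\le n$, the Krawtchouk polynomial is $K_i^{(n,q)}(z)=\sum_{l=0}^{i}(-1)^l(q-1)^{i-l}\binom{z}{l}\binom{n-z}{i-l}$, and the normalized Krawtchouk polynomial is $Q_i^{(n,q)}(t)=\frac{1}{r_i}K_i^{(n,q)}\!\big(\tfrac{n(1-t)}{2}\big)$ with $r_i=(q-1)^i\binom{n}{i}$; every real polynomial of degree $m\le n$ in $t$ has a unique expansion $\sum_{i=0}^m f_iQ_i^{(n,q)}(t)$. *)

theory Defs
  imports Complex_Main
begin

definition krawtchouk :: "nat \<Rightarrow> nat \<Rightarrow> nat \<Rightarrow> real \<Rightarrow> real" where
  "krawtchouk n q i z =
     (\<Sum>l = 0..i. (-1) ^ l * (real q - 1) ^ (i - l) * (z gchoose l) * ((real n - z) gchoose (i - l)))"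

definition norm_krawtchouk :: "nat \<Rightarrow> nat \<Rightarrow> nat \<Rightarrow> real \<Rightarrow> real" where
  "norm_krawtchouk n q i t =
     krawtchouk n q i (real n * (1 - t) / 2) / ((real q - 1) ^ i * real (n choose i))"

end

theory Submission
  imports Defs
begin

lemma gch2: "(a::real) gchoose 2 = a*(a-1)/2"
  by (simp add: gbinomial_prod_rev numeral_eq_Suc)
lemma gch3: "(a::real) gchoose 3 = a*(a-1)*(a-2)/6"
  by (simp add: gbinomial_prod_rev numeral_eq_Suc)

lemma gch2': "(a::real) gchoose (Suc (Suc 0)) = a*(a-1)/2"
  using gch2 by (simp add: numeral_eq_Suc)
lemma gch3': "(a::real) gchoose (Suc (Suc (Suc 0))) = a*(a-1)*(a-2)/6"
  using gch3 by (simp add: numeral_eq_Suc)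

lemma coeffs:
  fixes c0 c1 c2 c3 :: real
  assumes "\<And>z. c0 + c1*z + c2*z^2 + c3*z^3 = 0"
  shows "c1 = 0 \<and> c2 = 0 \<and> c3 = 0"
proof -
  have "c0 = 0" using assms[of 0] by simp
  moreover have "c0 + c1 + c2 + c3 = 0" using assms[of 1] by simp
  moreover have "c0 - c1 + c2 - c3 = 0" using assms[of "-1"] by simp
  moreover have "c0 + 2*c1 + 4*c2 + 8*c3 = 0" using assms[of 2] by simp
  ultimately show ?thesis by linarith
qed

lemma K1: "krawtchouk n q 1 z = (real q - 1) * real n - real q * z"
  by (simp add: krawtchouk_def algebra_simps)

lemma K2: "krawtchouk n q 2 z =
   (real q)^2/2 * z^2 + (- ((real q - 1)^2*(2*real n-1)/2) - (real q - 1)*real n - 1/2) * z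
   + (real q - 1)^2 * real n * (real n - 1)/2"
  by (simp add: krawtchouk_def numeral_eq_Suc gch2' power2_eq_square field_simps)

lemma K3: "krawtchouk n q 3 z =
   - ((real q)^3/6 * z^3)
   + ((real q - 1)^3*(3*real n-3)/6 + (real q - 1)^2*(2*real n-1)/2 + (real q - 1)*(real n+1)/2 + 1/2) * z^2
   + ((real q - 1)^3*(6*real n - 3*(real n)^2 - 2)/6 - (real q - 1)^2*real n*(real n-1)/2 - (real q - 1)*real n/2 - 1/3) * z
   + (real q - 1)^3 * ((real n)^3 - 3*(real n)^2 + 2*real n)/6"
  by (simp add: krawtchouk_def numeral_eq_Suc gch2' gch3' power2_eq_square power3_eq_cube field_simps)

theorem lemma2:
  fixes n q :: nat and d j :: int and S1 s d0 e f0 f1 f2 f3 :: real and f :: "real \<Rightarrow> real"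
  assumes nq: "n \<ge> q" "q \<ge> 2"
    and S1_def: "S1 = sqrt (real q ^ 2 + 4 * (real q - 1) * (real n - 2))"
    and j_def: "j = int q * (int n - 1 - d) - int n + 2"
    and j_range: "0 \<le> j" "real_of_int j < (S1 - real q) / 2"
    and s_def: "s = 1 - 2 * real_of_int d / real n"
    and d0_def: "d0 = real n - real_of_int j * (real n - 1) / (real q * (real_of_int j + real q - 1))"
    and e_rat: "e \<in> \<rat>" and e_pos: "0 < e" and e_le: "e \<le> 1" and e_int: "d0 + e \<in> \<int>"
    and f_def: "\<And>t. f t =
        (t + 1 + 2 * e / real n - 2 * real_of_int j * (real n - 1) / (real n * real q * (real_of_int j + real q - 1)))
      * (t + 1 + 2 * (e - 1) / real n - 2 * real_of_int j * (real n - 1) / (real n * real q * (real_of_int j + real q - 1)))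
      * (t - s)"
    and expansion: "\<And>t. f t = f0 + f1 * norm_krawtchouk n q 1 t + f2 * norm_krawtchouk n q 2 t
                              + f3 * norm_krawtchouk n q 3 t"
  shows "f1 > 0"
  proof -
  define N where "N = real n"
  define Q where "Q = real q"
  define J where "J = real_of_int j"
  define D where "D = real_of_int d"
  have N2: "N \<ge> 2" using nq unfolding N_def by simp
  have Q2: "Q \<ge> 2" using nq unfolding Q_def by simp
  have NQ: "N \<ge> Q" using nq unfolding N_def Q_def by simp
  have J0: "J \<ge> 0" using j_range unfolding J_def by simp
  have jD: "J = Q * (N - 1 - D) - N + 2" using j_def unfolding J_def Q_def N_def D_def by simp
  define cc where "cc = J * (N - 1) / (Q * (J + Q - 1))"
  define x where "x = e - cc"
  define w where "w = 8 / N^3"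
  define g1 where "g1 = f1 / ((Q - 1) * N)"
  define g2 where "g2 = f2 / ((Q - 1)^2 * real (n choose 2))"
  define g3 where "g3 = f3 / ((Q - 1)^3 * real (n choose 3))"
  have fz: "w*(N+x-z)*(N+x-1-z)*(D-z) = f0 + g1 * krawtchouk n q 1 z + g2 * krawtchouk n q 2 z + g3 * krawtchouk n q 3 z" for z
  proof -
    define t where "t = 1 - 2*z/N"
    have tz: "real n * (1 - t) / 2 = z" using N2 unfolding t_def N_def by (simp add: field_simps)
    have cc2: "2 * real_of_int j * (real n - 1) / (real n * real q * (real_of_int j + real q - 1)) = 2*cc/N"
      unfolding cc_def N_def Q_def J_def by (simp add: divide_divide_eq_left mult.assoc mult.left_commute)
    have sD: "s = 1 - 2*D/N" unfolding s_def D_def N_def by simp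
    have "f t = (t + 1 + 2*e/N - 2*cc/N) * (t + 1 + 2*(e-1)/N - 2*cc/N) * (t - s)"
      unfolding f_def cc2 N_def by simp
    also have "\<dots> = w*(N+x-z)*(N+x-1-z)*(D-z)"
      unfolding sD t_def w_def x_def
      using N2 by (simp add: field_simps power3_eq_cube)
    finally have "f t = w*(N+x-z)*(N+x-1-z)*(D-z)" .
    moreover have "f t = f0 + g1 * krawtchouk n q 1 z + g2 * krawtchouk n q 2 z + g3 * krawtchouk n q 3 z"
      unfolding expansion norm_krawtchouk_def tz g1_def g2_def g3_def Q_def N_def by simp
    ultimately show ?thesis by simp
  qed
  define a where "a = N + x"
  define b where "b = N + x - 1"
  define k21 where "k21 = - ((Q - 1)^2*(2*N-1)/2) - (Q - 1)*N - 1/2"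
  define k32 where "k32 = (Q - 1)^3*(3*N-3)/6 + (Q - 1)^2*(2*N-1)/2 + (Q - 1)*(N+1)/2 + 1/2"
  define k31 where "k31 = (Q - 1)^3*(6*N - 3*N^2 - 2)/6 - (Q - 1)^2*N*(N-1)/2 - (Q - 1)*N/2 - 1/3"
  define k20 where "k20 = (Q - 1)^2 * N * (N - 1)/2"
  define k30 where "k30 = (Q - 1)^3 * (N^3 - 3*N^2 + 2*N)/6"
  have "(w*a*b*D - f0 - g1*(Q-1)*N - g2*k20 - g3*k30)
      + (- w*(a*b+a*D+b*D) + g1*Q - g2*k21 - g3*k31) * z
      + (w*(a+b+D) - g2*Q^2/2 - g3*k32) * z^2 + (- w + g3*Q^3/6) * z^3 = 0" for z
  proof -
    have "w*(N+x-z)*(N+x-1-z)*(D-z) - (f0 + g1 * krawtchouk n q 1 z + g2 * krawtchouk n q 2 z + g3 * krawtchouk n q 3 z) = 0"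
      using fz[of z] by simp
    then show ?thesis
      unfolding K1 K2 K3 a_def b_def k21_def k32_def k31_def k20_def k30_def N_def[symmetric] Q_def[symmetric]
      by (simp add: algebra_simps power2_eq_square power3_eq_cube)
  qed
  from coeffs[OF this] have c1: "- w*(a*b+a*D+b*D) + g1*Q - g2*k21 - g3*k31 = 0"
    and c2: "w*(a+b+D) - g2*Q^2/2 - g3*k32 = 0" and c3: "- w + g3*Q^3/6 = 0" by auto
  have g3e: "g3 = 6*w/Q^3" using c3 Q2 by (simp add: field_simps)
  have g2e: "g2 = 2*(w*(a+b+D) - g3*k32)/Q^2" using c2 Q2 by (simp add: field_simps)
  have g1e: "g1 = (w*(a*b+a*D+b*D) + g2*k21 + g3*k31)/Q" using c1 Q2 by (simp add: field_simps)
  have f1e: "f1 = g1 * (Q - 1) * N" unfolding g1_def using Q2 N2 by simp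
  define S where "S = N + Q * x"
  define Qd where "Qd = S^2 - (Q + 2*J)*S + 2*J + (Q - 1)*(3*N - 2)"
  have f1v: "f1 = 8*(Q-1)/(Q^3*N^2) * Qd"
    unfolding f1e g1e g2e g3e w_def Qd_def S_def jD a_def b_def k21_def k32_def k31_def
    using Q2 N2 by (simp add: field_simps power2_eq_square power3_eq_cube)
  have rad: "0 \<le> Q^2 + 4*(Q-1)*(N-2)" using Q2 N2 by (simp add: mult_nonneg_nonneg)
  have "2*J + Q < sqrt (Q^2 + 4*(Q-1)*(N-2))"
    using j_range(2) S1_def unfolding J_def Q_def N_def by simp
  moreover have "0 \<le> 2*J + Q" using J0 Q2 by simp
  ultimately have "(2*J + Q)^2 < (sqrt (Q^2 + 4*(Q-1)*(N-2)))^2"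
    by (intro power_strict_mono) auto
  then have sq: "(2*J + Q)^2 < Q^2 + 4*(Q-1)*(N-2)" using rad by simp
  have h1: "(Q-1)*N \<ge> (Q-1)*Q" using NQ Q2 by (intro mult_left_mono) auto
  have h2: "Q*Q \<ge> 2*Q" using Q2 by (intro mult_right_mono) auto
  have e4: "4*Qd = (2*S - (Q+2*J))^2 + (8*J + 4*(Q-1)*(3*N-2) - (Q+2*J)^2)"
    unfolding Qd_def by (simp add: algebra_simps power2_eq_square)
  have pos: "8*J + 4*(Q-1)*(3*N-2) - (Q+2*J)^2 > 0"
  proof -
    have "8*J + 4*(Q-1)*(3*N-2) - (Q+2*J)^2 = 8*J + 12*(Q*N) - 12*N - 8*Q + 8 - Q*Q - 4*(Q*J) - 4*(J*J)"
      by (simp add: algebra_simps power2_eq_square)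
    moreover have "(2*J + Q)^2 = 4*(J*J) + 4*(Q*J) + Q*Q" by (simp add: algebra_simps power2_eq_square)
    moreover have "4*(Q-1)*(N-2) = 4*(Q*N) - 4*N - 8*Q + 8" by (simp add: algebra_simps)
    moreover have "Q^2 = Q*Q" by (simp add: power2_eq_square)
    moreover have "(Q-1)*N = Q*N - N" "(Q-1)*Q = Q*Q - Q" by (simp_all add: algebra_simps)
    ultimately show ?thesis using sq h1 h2 J0 Q2 by (smt (verit))
  qed
  note e4 pos
  then have "Qd > 0" by (smt (verit) zero_le_power2)
  then show ?thesis unfolding f1v using Q2 N2 by simp
qed

end
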